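(* Let $R$ be a DT ring. Then $R/J(R)\cong R_1\times R_2$, where $R_1$ is either the zero ring or a nonzero Boolean ring, and $R_2$ is either the zero ring or a nonzero Yaqub ring.
   Context: All rings are associative with identity. $J(R)$ is the Jacobson radical, $U(R)$ the group of units. $\Delta(R)=\{x\in R: x+u\in U(R)\text{ for all }u\in U(R)\}$. $\mathrm{Tr}(R)=\{x\in R: x^3=x\}$ (tripotent elements). A ring $R$ is a DT ring ($\Delta$-tripotent ring) if every $r\in R$ can be written $r=e+d$ with $e\in\mathrm{Tr}(R)$ and $d\in\Delta(R)$. A Boolean ring is a ring in which every element is idempotent. A Yaqub ring is a ring that is a subdirect product of copies of $\mathbb{Z}_3$ (equivalently, a ring in which $3$ is nilpotent and $x^3=x$ for all $x$). *)

theory Defs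
  imports "HOL-Algebra.Algebra"
begin

(* Left ideals (HOL-Algebra only has two-sided ideals). *)
definition left_ideal :: "'a set \<Rightarrow> ('a, 'b) ring_scheme \<Rightarrow> bool" where
  "left_ideal I R \<longleftrightarrow> additive_subgroup I R \<and>
     (\<forall>a \<in> carrier R. \<forall>x \<in> I. a \<otimes>\<^bsub>R\<^esub> x \<in> I)"

definition maximal_left_ideal :: "'a set \<Rightarrow> ('a, 'b) ring_scheme \<Rightarrow> bool" where
  "maximal_left_ideal I R \<longleftrightarrow> left_ideal I R \<and> I \<noteq> carrier R \<and>
     (\<forall>K. left_ideal K R \<and> I \<subseteq> K \<longrightarrow> K = I \<or> K = carrier R)"

(* Jacobson radical: intersection of all maximal left ideals (= carrier R if there are none) *)
definition jacobson_radical :: "('a, 'b) ring_scheme \<Rightarrow> 'a set" where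
  "jacobson_radical R = carrier R \<inter> \<Inter> {I. maximal_left_ideal I R}"

definition Delta :: "('a, 'b) ring_scheme \<Rightarrow> 'a set" where
  "Delta R = {x \<in> carrier R. \<forall>u \<in> Units R. x \<oplus>\<^bsub>R\<^esub> u \<in> Units R}"

definition tripotents :: "('a, 'b) ring_scheme \<Rightarrow> 'a set" where
  "tripotents R = {x \<in> carrier R. x [^]\<^bsub>R\<^esub> (3::nat) = x}"

definition DT_ring :: "('a, 'b) ring_scheme \<Rightarrow> bool" where
  "DT_ring R \<longleftrightarrow> ring R \<and>
     (\<forall>r \<in> carrier R. \<exists>e \<in> tripotents R. \<exists>d \<in> Delta R. r = e \<oplus>\<^bsub>R\<^esub> d)"

definition zero_ring :: "('a, 'b) ring_scheme \<Rightarrow> bool" where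
  "zero_ring R \<longleftrightarrow> ring R \<and> carrier R = {\<zero>\<^bsub>R\<^esub>}"

definition boolean_ring :: "('a, 'b) ring_scheme \<Rightarrow> bool" where
  "boolean_ring R \<longleftrightarrow> ring R \<and> (\<forall>x \<in> carrier R. x \<otimes>\<^bsub>R\<^esub> x = x)"

(* Yaqub ring, via the equivalent characterization given in the paper:
   3 is nilpotent and x^3 = x for all x *)
definition yaqub_ring :: "('a, 'b) ring_scheme \<Rightarrow> bool" where
  "yaqub_ring R \<longleftrightarrow> ring R \<and>
     (\<exists>n::nat. (\<one>\<^bsub>R\<^esub> \<oplus>\<^bsub>R\<^esub> \<one>\<^bsub>R\<^esub> \<oplus>\<^bsub>R\<^esub> \<one>\<^bsub>R\<^esub>) [^]\<^bsub>R\<^esub> n = \<zero>\<^bsub>R\<^esub>) \<and>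
     (\<forall>x \<in> carrier R. x [^]\<^bsub>R\<^esub> (3::nat) = x)"

end

theory Submission
  imports Defs
begin


lemma (in ring) tripotent_decomp:
  assumes trip: "\<And>x. x \<in> carrier R \<Longrightarrow> x \<otimes> x \<otimes> x = x"
  shows "\<exists>(R1 :: 'a set ring) (R2 :: 'a set ring).
           (zero_ring R1 \<or> (boolean_ring R1 \<and> \<not> zero_ring R1)) \<and>
           (zero_ring R2 \<or> (yaqub_ring R2 \<and> \<not> zero_ring R2)) \<and>
           R \<simeq> RDirProd R1 R2"
proof -
  have c1: "\<one> \<oplus> \<one> \<in> carrier R" by simp
  have "(\<one> \<oplus> \<one>) \<otimes> (\<one> \<oplus> \<one>) \<otimes> (\<one> \<oplus> \<one>) = (\<one> \<oplus> \<one> \<oplus> \<one> \<oplus> \<one> \<oplus> \<one> \<oplus> \<one>) \<oplus> (\<one> \<oplus> \<one>)"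
    by algebra
  with trip[OF c1] have "(\<one> \<oplus> \<one> \<oplus> \<one> \<oplus> \<one> \<oplus> \<one> \<oplus> \<one>) \<oplus> (\<one> \<oplus> \<one>) = \<zero> \<oplus> (\<one> \<oplus> \<one>)" by simp
  hence six: "\<one> \<oplus> \<one> \<oplus> \<one> \<oplus> \<one> \<oplus> \<one> \<oplus> \<one> = \<zero>"
    using add.right_cancel[of "\<one> \<oplus> \<one>"] by (metis c1 add.m_closed one_closed zero_closed)
  have six': "x \<oplus> x \<oplus> x \<oplus> x \<oplus> x \<oplus> x = \<zero>" if "x \<in> carrier R" for x
  proof -
    have "x \<oplus> x \<oplus> x \<oplus> x \<oplus> x \<oplus> x = (\<one> \<oplus> \<one> \<oplus> \<one> \<oplus> \<one> \<oplus> \<one> \<oplus> \<one>) \<otimes> x"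
      using that by algebra
    thus ?thesis using six that by simp
  qed
  define I1 where "I1 = {x \<in> carrier R. x \<oplus> x \<oplus> x = \<zero>}"
  define I2 where "I2 = {x \<in> carrier R. x \<oplus> x = \<zero>}"
  have id1: "ideal I1 R"
  proof (rule idealI[OF ring_axioms])
    show "subgroup I1 (add_monoid R)"
    proof (rule add.subgroupI)
      show "I1 \<subseteq> carrier R" by (auto simp: I1_def)
      show "I1 \<noteq> {}" unfolding I1_def by (metis (mono_tags) empty_iff mem_Collect_eq zero_closed l_zero)
    next
      fix a assume a: "a \<in> I1"
      have "\<ominus> a \<oplus> \<ominus> a \<oplus> \<ominus> a = \<ominus> (a \<oplus> a \<oplus> a)" using a[unfolded I1_def, THEN CollectD, THEN conjunct1] by algebra
      thus "\<ominus> a \<in> I1" using a by (simp add: I1_def)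
    next
      fix a b assume a: "a \<in> I1" and b: "b \<in> I1"
      have "(a \<oplus> b) \<oplus> (a \<oplus> b) \<oplus> (a \<oplus> b) = (a \<oplus> a \<oplus> a) \<oplus> (b \<oplus> b \<oplus> b)" using a[unfolded I1_def, THEN CollectD, THEN conjunct1] b[unfolded I1_def, THEN CollectD, THEN conjunct1] by algebra
      thus "a \<oplus> b \<in> I1" using a b by (simp add: I1_def)
    qed
  next
    fix a x assume a: "a \<in> I1" and x: "x \<in> carrier R"
    have "x \<otimes> a \<oplus> x \<otimes> a \<oplus> x \<otimes> a = x \<otimes> (a \<oplus> a \<oplus> a)" using a[unfolded I1_def, THEN CollectD, THEN conjunct1] x by algebra
    thus "x \<otimes> a \<in> I1" using a x by (simp add: I1_def)
    have "a \<otimes> x \<oplus> a \<otimes> x \<oplus> a \<otimes> x = (a \<oplus> a \<oplus> a) \<otimes> x" using a[unfolded I1_def, THEN CollectD, THEN conjunct1] x by algebra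
    thus "a \<otimes> x \<in> I1" using a x by (simp add: I1_def)
  qed
  have id2: "ideal I2 R"
  proof (rule idealI[OF ring_axioms])
    show "subgroup I2 (add_monoid R)"
    proof (rule add.subgroupI)
      show "I2 \<subseteq> carrier R" by (auto simp: I2_def)
      show "I2 \<noteq> {}" unfolding I2_def by (metis (mono_tags) empty_iff mem_Collect_eq zero_closed l_zero)
    next
      fix a assume a: "a \<in> I2"
      have "\<ominus> a \<oplus> \<ominus> a = \<ominus> (a \<oplus> a)" using a[unfolded I2_def, THEN CollectD, THEN conjunct1] by algebra
      thus "\<ominus> a \<in> I2" using a by (simp add: I2_def)
    next
      fix a b assume a: "a \<in> I2" and b: "b \<in> I2"
      have "(a \<oplus> b) \<oplus> (a \<oplus> b) = (a \<oplus> a) \<oplus> (b \<oplus> b)" using a[unfolded I2_def, THEN CollectD, THEN conjunct1] b[unfolded I2_def, THEN CollectD, THEN conjunct1] by algebra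
      thus "a \<oplus> b \<in> I2" using a b by (simp add: I2_def)
    qed
  next
    fix a x assume a: "a \<in> I2" and x: "x \<in> carrier R"
    have "x \<otimes> a \<oplus> x \<otimes> a = x \<otimes> (a \<oplus> a)" using a[unfolded I2_def, THEN CollectD, THEN conjunct1] x by algebra
    thus "x \<otimes> a \<in> I2" using a x by (simp add: I2_def)
    have "a \<otimes> x \<oplus> a \<otimes> x = (a \<oplus> a) \<otimes> x" using a[unfolded I2_def, THEN CollectD, THEN conjunct1] x by algebra
    thus "a \<otimes> x \<in> I2" using a x by (simp add: I2_def)
  qed
  have inter: "I1 \<inter> I2 = {\<zero>}"
  proof
    show "{\<zero>} \<subseteq> I1 \<inter> I2" by (simp add: I1_def I2_def)
    show "I1 \<inter> I2 \<subseteq> {\<zero>}"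
    proof
      fix x assume "x \<in> I1 \<inter> I2"
      hence x: "x \<in> carrier R" "x \<oplus> x \<oplus> x = \<zero>" "x \<oplus> x = \<zero>" by (auto simp: I1_def I2_def)
      have "x = (x \<oplus> x \<oplus> x) \<ominus> (x \<oplus> x)" using x(1) by algebra
      thus "x \<in> {\<zero>}" using x by simp
    qed
  qed
  have m2: "\<ominus> (\<one> \<oplus> \<one>) \<in> I1"
  proof -
    have "\<ominus> (\<one> \<oplus> \<one>) \<oplus> \<ominus> (\<one> \<oplus> \<one>) \<oplus> \<ominus> (\<one> \<oplus> \<one>) = \<ominus> (\<one> \<oplus> \<one> \<oplus> \<one> \<oplus> \<one> \<oplus> \<one> \<oplus> \<one>)" by algebra
    thus ?thesis using six by (simp add: I1_def)
  qed
  have p3: "\<one> \<oplus> \<one> \<oplus> \<one> \<in> I2"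
  proof -
    have "(\<one> \<oplus> \<one> \<oplus> \<one>) \<oplus> (\<one> \<oplus> \<one> \<oplus> \<one>) = \<one> \<oplus> \<one> \<oplus> \<one> \<oplus> \<one> \<oplus> \<one> \<oplus> \<one>" by algebra
    thus ?thesis using six by (simp add: I2_def)
  qed
  have sum: "I1 <+> I2 = carrier R"
  proof (rule ideal.one_imp_carrier[OF add_ideals[OF id1 id2]])
    have "\<one> = \<ominus> (\<one> \<oplus> \<one>) \<oplus> (\<one> \<oplus> \<one> \<oplus> \<one>)" by algebra
    thus "\<one> \<in> I1 <+> I2" using m2 p3 unfolding set_add_def' by blast
  qed
  have iso: "R \<simeq> RDirProd (R Quot I1) (R Quot I2)"
    using ring_iso_trans[OF FactRing_zeroideal(2), of "RDirProd (R Quot I1) (R Quot I2)"] chinese_remainder_simple[OF id1 id2 sum] inter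
    by simp
  interpret Q1: ring "R Quot I1" by (rule ideal.quotient_is_ring[OF id1])
  interpret Q2: ring "R Quot I2" by (rule ideal.quotient_is_ring[OF id2])
  have carrQ: "carrier (R Quot I) = (\<lambda>x. I +> x) ` carrier R" for I
    unfolding FactRing_def A_RCOSETS_def' by auto
  have hom1: "(+>) I1 \<in> ring_hom R (R Quot I1)" by (rule ideal.rcos_ring_hom[OF id1])
  have hom2: "(+>) I2 \<in> ring_hom R (R Quot I2)" by (rule ideal.rcos_ring_hom[OF id2])
  have sq3: "x \<otimes> x \<oplus> x \<otimes> x \<oplus> x \<otimes> x \<oplus> (x \<oplus> x \<oplus> x) = \<zero>" if x: "x \<in> carrier R" for x
  proof -
    have "(x \<oplus> \<one>) \<otimes> (x \<oplus> \<one>) \<otimes> (x \<oplus> \<one>) = x \<otimes> x \<otimes> x \<oplus> (x \<otimes> x \<oplus> x \<otimes> x \<oplus> x \<otimes> x \<oplus> (x \<oplus> x \<oplus> x)) \<oplus> \<one>"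
      using x apply algebra by simp
    hence "x \<oplus> (x \<otimes> x \<oplus> x \<otimes> x \<oplus> x \<otimes> x \<oplus> (x \<oplus> x \<oplus> x)) \<oplus> \<one> = x \<oplus> \<zero> \<oplus> \<one>"
      using trip[of "x \<oplus> \<one>"] trip[OF x] x by simp
    thus ?thesis using x by (metis add.m_closed add.l_cancel add.right_cancel m_closed one_closed zero_closed)
  qed
  have bool: "boolean_ring (R Quot I1)"
    unfolding boolean_ring_def
  proof (intro conjI ballI)
    show "ring (R Quot I1)" by (rule Q1.ring_axioms)
    fix Xc assume "Xc \<in> carrier (R Quot I1)"
    then obtain x where x: "x \<in> carrier R" and Xc: "Xc = I1 +> x" using carrQ by blast
    have "Xc \<otimes>\<^bsub>R Quot I1\<^esub> Xc = I1 +> (x \<otimes> x)" using Xc x ring_hom_mult[OF hom1] by simp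
    also have "\<dots> = I1 +> x"
    proof -
      have "(x \<otimes> x \<ominus> x) \<oplus> (x \<otimes> x \<ominus> x) \<oplus> (x \<otimes> x \<ominus> x) = (x \<otimes> x \<oplus> x \<otimes> x \<oplus> x \<otimes> x \<oplus> (x \<oplus> x \<oplus> x)) \<ominus> (x \<oplus> x \<oplus> x \<oplus> x \<oplus> x \<oplus> x)"
        using x by algebra
      hence "x \<otimes> x \<ominus> x \<in> I1" using sq3[OF x] six'[OF x] x by (simp add: I1_def)
      thus ?thesis using quotient_eq_iff_same_a_r_cos[OF id1] x by simp
    qed
    finally show "Xc \<otimes>\<^bsub>R Quot I1\<^esub> Xc = Xc" using Xc by simp
  qed
  have yaq: "yaqub_ring (R Quot I2)"
    unfolding yaqub_ring_def
  proof (intro conjI ballI)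
    show "ring (R Quot I2)" by (rule Q2.ring_axioms)
    have "\<one>\<^bsub>R Quot I2\<^esub> \<oplus>\<^bsub>R Quot I2\<^esub> \<one>\<^bsub>R Quot I2\<^esub> \<oplus>\<^bsub>R Quot I2\<^esub> \<one>\<^bsub>R Quot I2\<^esub> = I2 +> (\<one> \<oplus> \<one> \<oplus> \<one>)"
      using ring_hom_add[OF hom2] ring_hom_one[OF hom2] by simp
    also have "\<dots> = I2 +> \<zero>"
      using quotient_eq_iff_same_a_r_cos[OF id2, of "\<one> \<oplus> \<one> \<oplus> \<one>" \<zero>] p3 by (simp add: a_minus_def)
    also have "\<dots> = \<zero>\<^bsub>R Quot I2\<^esub>" using ring_hom_zero[OF hom2 ring_axioms Q2.ring_axioms] by simp
    finally have "(\<one>\<^bsub>R Quot I2\<^esub> \<oplus>\<^bsub>R Quot I2\<^esub> \<one>\<^bsub>R Quot I2\<^esub> \<oplus>\<^bsub>R Quot I2\<^esub> \<one>\<^bsub>R Quot I2\<^esub>) [^]\<^bsub>R Quot I2\<^esub> (1::nat) = \<zero>\<^bsub>R Quot I2\<^esub>"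
      by simp
    thus "\<exists>n::nat. (\<one>\<^bsub>R Quot I2\<^esub> \<oplus>\<^bsub>R Quot I2\<^esub> \<one>\<^bsub>R Quot I2\<^esub> \<oplus>\<^bsub>R Quot I2\<^esub> \<one>\<^bsub>R Quot I2\<^esub>) [^]\<^bsub>R Quot I2\<^esub> n = \<zero>\<^bsub>R Quot I2\<^esub>" by blast
  next
    fix Xc assume "Xc \<in> carrier (R Quot I2)"
    then obtain x where x: "x \<in> carrier R" and Xc: "Xc = I2 +> x" using carrQ by blast
    have "Xc [^]\<^bsub>R Quot I2\<^esub> (3::nat) = Xc \<otimes>\<^bsub>R Quot I2\<^esub> Xc \<otimes>\<^bsub>R Quot I2\<^esub> Xc"
      using \<open>Xc \<in> carrier (R Quot I2)\<close> by (simp add: numeral_3_eq_3)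
    also have "\<dots> = I2 +> (x \<otimes> x \<otimes> x)" using Xc x ring_hom_mult[OF hom2] by simp
    also have "\<dots> = Xc" using trip[OF x] Xc by simp
    finally show "Xc [^]\<^bsub>R Quot I2\<^esub> (3::nat) = Xc" .
  qed
  show ?thesis
    apply (rule exI[of _ "R Quot I1"], rule exI[of _ "R Quot I2"])
    using bool yaq iso Q1.ring_axioms Q2.ring_axioms
    by (auto simp: zero_ring_def)
qed



context ring begin

lemma maxgen:
  assumes M: "maximal_left_ideal M R" and y: "y \<in> carrier R" "y \<notin> M" and t: "t \<in> carrier R"
  shows "\<exists>m\<in>M. \<exists>r\<in>carrier R. t = m \<oplus> r \<otimes> y"
proof -
  have HML: "left_ideal M R" and Mne: "M \<noteq> carrier R"
    and Mmax: "\<And>K. left_ideal K R \<Longrightarrow> M \<subseteq> K \<Longrightarrow> K = M \<or> K = carrier R"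
    using M unfolding maximal_left_ideal_def by auto
  have Ms: "additive_subgroup M R" and Ml: "\<And>a x. a \<in> carrier R \<Longrightarrow> x \<in> M \<Longrightarrow> a \<otimes> x \<in> M"
    using HML unfolding left_ideal_def by auto
  have Mc: "M \<subseteq> carrier R" using additive_subgroup.a_subset[OF Ms] .
  define K where "K = {x. \<exists>m\<in>M. \<exists>r\<in>carrier R. x = m \<oplus> r \<otimes> y}"
  have Kc: "K \<subseteq> carrier R" unfolding K_def using Mc y by auto
  have KL: "left_ideal K R"
    unfolding left_ideal_def
  proof (intro conjI ballI)
    show "additive_subgroup K R"
    proof (rule additive_subgroupI, rule add.subgroupI)
      show "K \<subseteq> carrier R" by (rule Kc)
      have "\<zero> = \<zero> \<oplus> \<zero> \<otimes> y" using y by simp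
      thus "K \<noteq> {}" unfolding K_def using additive_subgroup.zero_closed[OF Ms] by blast
    next
      fix a assume "a \<in> K"
      then obtain m r where m: "m \<in> M" and r: "r \<in> carrier R" and a: "a = m \<oplus> r \<otimes> y" unfolding K_def by blast
      have mc: "m \<in> carrier R" using m Mc by auto
      have "\<ominus> a = (\<ominus> m) \<oplus> (\<ominus> r) \<otimes> y" using a mc r y by algebra
      thus "\<ominus> a \<in> K" unfolding K_def using additive_subgroup.a_inv_closed[OF Ms m] r by blast
    next
      fix a b assume "a \<in> K" "b \<in> K"
      then obtain m r m' r' where m: "m \<in> M" and r: "r \<in> carrier R" and a: "a = m \<oplus> r \<otimes> y"
        and m': "m' \<in> M" and r': "r' \<in> carrier R" and b: "b = m' \<oplus> r' \<otimes> y" unfolding K_def by blast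
      have mc: "m \<in> carrier R" "m' \<in> carrier R" using m m' Mc by auto
      have "a \<oplus> b = (m \<oplus> m') \<oplus> (r \<oplus> r') \<otimes> y" using a b mc r r' y by algebra
      thus "a \<oplus> b \<in> K" unfolding K_def using additive_subgroup.a_closed[OF Ms m m'] r r' by blast
    qed
  next
    fix a x assume ac: "a \<in> carrier R" and "x \<in> K"
    then obtain m r where m: "m \<in> M" and r: "r \<in> carrier R" and x: "x = m \<oplus> r \<otimes> y" unfolding K_def by blast
    have mc: "m \<in> carrier R" using m Mc by auto
    have "a \<otimes> x = a \<otimes> m \<oplus> (a \<otimes> r) \<otimes> y" using x mc r y ac by algebra
    thus "a \<otimes> x \<in> K" unfolding K_def using Ml[OF ac m] ac r by blast
  qed
  have MK: "M \<subseteq> K"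
  proof
    fix m assume m: "m \<in> M"
    hence "m = m \<oplus> \<zero> \<otimes> y" using Mc y by auto
    thus "m \<in> K" unfolding K_def using m by blast
  qed
  have "y \<in> K"
  proof -
    have "y = \<zero> \<oplus> \<one> \<otimes> y" using y by simp
    thus ?thesis unfolding K_def using additive_subgroup.zero_closed[OF Ms] by blast
  qed
  hence "K \<noteq> M" using y by auto
  hence "K = carrier R" using Mmax[OF KL MK] by auto
  thus ?thesis using t unfolding K_def by auto
qed

lemma maximal_left_ideal_facts:
  assumes M: "maximal_left_ideal M R"
  shows "M \<subseteq> carrier R" "\<zero> \<in> M" "\<And>a b. a \<in> M \<Longrightarrow> b \<in> M \<Longrightarrow> a \<oplus> b \<in> M"
    "\<And>a. a \<in> M \<Longrightarrow> \<ominus> a \<in> M" "\<And>a x. a \<in> carrier R \<Longrightarrow> x \<in> M \<Longrightarrow> a \<otimes> x \<in> M"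
    "\<one> \<notin> M"
proof -
  have HML: "left_ideal M R" and Mne: "M \<noteq> carrier R"
    using M unfolding maximal_left_ideal_def by auto
  have Ms: "additive_subgroup M R" and Ml: "\<And>a x. a \<in> carrier R \<Longrightarrow> x \<in> M \<Longrightarrow> a \<otimes> x \<in> M"
    using HML unfolding left_ideal_def by auto
  show Mc: "M \<subseteq> carrier R" using additive_subgroup.a_subset[OF Ms] .
  show "\<zero> \<in> M" using additive_subgroup.zero_closed[OF Ms] .
  show "\<And>a b. a \<in> M \<Longrightarrow> b \<in> M \<Longrightarrow> a \<oplus> b \<in> M" using additive_subgroup.a_closed[OF Ms] .
  show "\<And>a. a \<in> M \<Longrightarrow> \<ominus> a \<in> M" using additive_subgroup.a_inv_closed[OF Ms] .
  show "\<And>a x. a \<in> carrier R \<Longrightarrow> x \<in> M \<Longrightarrow> a \<otimes> x \<in> M" by (rule Ml)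
  show "\<one> \<notin> M"
  proof
    assume "\<one> \<in> M"
    hence "carrier R \<subseteq> M" using Ml[of _ \<one>] by (metis r_one subsetI)
    thus False using Mc Mne by auto
  qed
qed

lemma jac_char:
  assumes y: "y \<in> carrier R"
    and L: "\<And>r. r \<in> carrier R \<Longrightarrow> \<exists>L\<in>carrier R. L \<otimes> (\<one> \<ominus> r \<otimes> y) = \<one>"
  shows "y \<in> jacobson_radical R"
  unfolding jacobson_radical_def
proof (intro IntI InterI CollectI y)
  fix M assume "M \<in> {I. maximal_left_ideal I R}"
  hence M: "maximal_left_ideal M R" by simp
  note F = maximal_left_ideal_facts[OF M]
  show "y \<in> M"
  proof (rule ccontr)
    assume "y \<notin> M"
    then obtain m r where m: "m \<in> M" and r: "r \<in> carrier R" and e: "\<one> = m \<oplus> r \<otimes> y"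
      using maxgen[OF M y] by blast
    have mc: "m \<in> carrier R" using m F(1) by auto
    have "m = \<one> \<ominus> r \<otimes> y" using e mc r y by (metis add.inv_solve_right m_closed one_closed a_minus_def)
    obtain Lr where Lr: "Lr \<in> carrier R" "Lr \<otimes> (\<one> \<ominus> r \<otimes> y) = \<one>" using L[OF r] by blast
    have "Lr \<otimes> m \<in> M" using F(5)[OF Lr(1) m] .
    hence "\<one> \<in> M" using Lr \<open>m = \<one> \<ominus> r \<otimes> y\<close> by simp
    thus False using F(6) by simp
  qed
qed

lemma colon_max:
  assumes M: "maximal_left_ideal M R" and s: "s \<in> carrier R" "s \<notin> M"
  shows "maximal_left_ideal {r \<in> carrier R. r \<otimes> s \<in> M} R"
proof -
  note F = maximal_left_ideal_facts[OF M]
  define C where "C = {r \<in> carrier R. r \<otimes> s \<in> M}"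
  have CL: "left_ideal C R"
    unfolding left_ideal_def
  proof (intro conjI ballI)
    show "additive_subgroup C R"
    proof (rule additive_subgroupI, rule add.subgroupI)
      show "C \<subseteq> carrier R" unfolding C_def by auto
      show "C \<noteq> {}" unfolding C_def using F(2) s by (metis (mono_tags) empty_iff mem_Collect_eq l_null zero_closed)
    next
      fix a assume "a \<in> C"
      thus "\<ominus> a \<in> C" unfolding C_def using F(4) s by (auto simp: l_minus)
    next
      fix a b assume "a \<in> C" "b \<in> C"
      thus "a \<oplus> b \<in> C" unfolding C_def using F(3) s by (auto simp: l_distr)
    qed
  next
    fix a x assume "a \<in> carrier R" "x \<in> C"
    thus "a \<otimes> x \<in> C" unfolding C_def using F(5) s by (auto simp: m_assoc)
  qed
  have Cne: "C \<noteq> carrier R" using s unfolding C_def by (metis (no_types, lifting) l_one mem_Collect_eq one_closed)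
  have Cmax: "K = carrier R \<or> K = C" if KL: "left_ideal K R" and CK: "C \<subseteq> K" for K
  proof (rule disjCI)
    assume "K \<noteq> C"
    then obtain k where k: "k \<in> K" "k \<notin> C" using CK by blast
    have Ks: "additive_subgroup K R" and Kl: "\<And>a x. a \<in> carrier R \<Longrightarrow> x \<in> K \<Longrightarrow> a \<otimes> x \<in> K"
      using KL unfolding left_ideal_def by auto
    have Kc: "K \<subseteq> carrier R" using additive_subgroup.a_subset[OF Ks] .
    have kc: "k \<in> carrier R" using k Kc by auto
    have ks: "k \<otimes> s \<notin> M" using k kc unfolding C_def by auto
    show "K = carrier R"
    proof
      show "carrier R \<subseteq> K"
      proof
        fix t assume t: "t \<in> carrier R"
        obtain m b where m: "m \<in> M" and b: "b \<in> carrier R" and e: "t \<otimes> s = m \<oplus> b \<otimes> (k \<otimes> s)"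
          using maxgen[OF M _ ks, of "t \<otimes> s"] kc s t by auto
        have mc: "m \<in> carrier R" using m F(1) by auto
        have "(t \<ominus> b \<otimes> k) \<otimes> s = t \<otimes> s \<ominus> b \<otimes> (k \<otimes> s)" using t b kc s by algebra
        also have "\<dots> = m" using e mc b kc s by (simp add: a_minus_def a_assoc r_neg)
        finally have "t \<ominus> b \<otimes> k \<in> C" unfolding C_def using m t b kc by auto
        hence "t \<ominus> b \<otimes> k \<in> K" using CK by auto
        moreover have "b \<otimes> k \<in> K" using Kl[OF b k(1)] .
        ultimately have "(t \<ominus> b \<otimes> k) \<oplus> b \<otimes> k \<in> K" using additive_subgroup.a_closed[OF Ks] by blast
        moreover have "(t \<ominus> b \<otimes> k) \<oplus> b \<otimes> k = t" using t b kc by algebra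
        ultimately show "t \<in> K" by simp
      qed
    next
      show "K \<subseteq> carrier R" by (rule Kc)
    qed
  qed
  show ?thesis unfolding maximal_left_ideal_def C_def[symmetric] using CL Cne Cmax by blast
qed

lemma jac_ideal: "ideal (jacobson_radical R) R"
proof (rule idealI[OF ring_axioms])
  let ?J = "jacobson_radical R"
  have mem: "x \<in> ?J \<longleftrightarrow> x \<in> carrier R \<and> (\<forall>M. maximal_left_ideal M R \<longrightarrow> x \<in> M)" for x
    unfolding jacobson_radical_def by auto
  show "subgroup ?J (add_monoid R)"
  proof (rule add.subgroupI)
    show "?J \<subseteq> carrier R" using mem by auto
    have "\<zero> \<in> ?J" using mem maximal_left_ideal_facts(2) by auto
    thus "?J \<noteq> {}" by auto
  next
    fix a assume "a \<in> ?J" thus "\<ominus> a \<in> ?J" using mem maximal_left_ideal_facts(4) by auto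
  next
    fix a b assume "a \<in> ?J" "b \<in> ?J" thus "a \<oplus> b \<in> ?J" using mem maximal_left_ideal_facts(3) by auto
  next
  qed
next
  let ?J = "jacobson_radical R"
  have mem: "x \<in> ?J \<longleftrightarrow> x \<in> carrier R \<and> (\<forall>M. maximal_left_ideal M R \<longrightarrow> x \<in> M)" for x
    unfolding jacobson_radical_def by auto
  fix a x assume a: "a \<in> ?J" and x: "x \<in> carrier R"
  show "x \<otimes> a \<in> ?J" using a x mem maximal_left_ideal_facts(5) by auto
  show "a \<otimes> x \<in> ?J"
    unfolding mem
  proof (intro conjI allI impI)
    show "a \<otimes> x \<in> carrier R" using a x mem by auto
    fix M assume M: "maximal_left_ideal M R"
    show "a \<otimes> x \<in> M"
    proof (cases "x \<in> M")
      case True thus ?thesis using a mem maximal_left_ideal_facts(5)[OF M] by auto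
    next
      case False
      have "a \<in> {r \<in> carrier R. r \<otimes> x \<in> M}" using a mem colon_max[OF M x False] by blast
      thus ?thesis by simp
    qed
  qed
qed

end


context ring begin

lemma unitI2:
  assumes "a \<in> carrier R" "b \<in> carrier R" "a \<otimes> b = \<one>" "b \<otimes> a = \<one>"
  shows "a \<in> Units R"
  using assms unfolding Units_def by blast

lemma neg_unit: assumes u: "u \<in> Units R" shows "\<ominus> u \<in> Units R"
proof -
  have uc: "u \<in> carrier R" "inv u \<in> carrier R" using u by auto
  have "(\<ominus> u) \<otimes> (\<ominus> (inv u)) = u \<otimes> inv u" "(\<ominus> (inv u)) \<otimes> (\<ominus> u) = inv u \<otimes> u" using uc by (algebra, (simp add: r_neg1 r_neg2)?)+
  thus ?thesis using u uc by (intro unitI2[of _ "\<ominus> (inv u)"]) auto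
qed

lemma D_carr: "d \<in> Delta R \<Longrightarrow> d \<in> carrier R" unfolding Delta_def by auto

lemma D_one_add: assumes d: "d \<in> Delta R" shows "\<one> \<oplus> d \<in> Units R"
proof -
  have "d \<oplus> \<one> \<in> Units R" using d unfolding Delta_def by auto
  thus ?thesis using D_carr[OF d] by (simp add: a_comm)
qed

lemma D_neg: assumes d: "d \<in> Delta R" shows "\<ominus> d \<in> Delta R"
  unfolding Delta_def
proof (intro CollectI conjI ballI)
  have dc: "d \<in> carrier R" using D_carr[OF d] .
  show "\<ominus> d \<in> carrier R" using dc by simp
  fix u assume u: "u \<in> Units R"
  have "d \<oplus> \<ominus> u \<in> Units R" using d neg_unit[OF u] unfolding Delta_def by auto
  hence "\<ominus> (d \<oplus> \<ominus> u) \<in> Units R" by (rule neg_unit)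
  moreover have "\<ominus> (d \<oplus> \<ominus> u) = \<ominus> d \<oplus> u" using dc Units_closed[OF u] by (algebra, (simp add: r_neg1 r_neg2)?)
  ultimately show "\<ominus> d \<oplus> u \<in> Units R" by simp
qed

lemma D_add: assumes d: "d \<in> Delta R" and d': "d' \<in> Delta R" shows "d \<oplus> d' \<in> Delta R"
  unfolding Delta_def
proof (intro CollectI conjI ballI)
  have dc: "d \<in> carrier R" "d' \<in> carrier R" using D_carr d d' by auto
  show "d \<oplus> d' \<in> carrier R" using dc by simp
  fix u assume u: "u \<in> Units R"
  have "d' \<oplus> u \<in> Units R" using d' u unfolding Delta_def by auto
  hence "d \<oplus> (d' \<oplus> u) \<in> Units R" using d unfolding Delta_def by auto
  thus "d \<oplus> d' \<oplus> u \<in> Units R" using dc Units_closed[OF u] by (simp add: a_assoc)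
qed

lemma D_lmul: assumes u: "u \<in> Units R" and d: "d \<in> Delta R" shows "u \<otimes> d \<in> Delta R"
  unfolding Delta_def
proof (intro CollectI conjI ballI)
  have dc: "d \<in> carrier R" using D_carr d by auto
  have uc: "u \<in> carrier R" "inv u \<in> carrier R" using u by auto
  show "u \<otimes> d \<in> carrier R" using dc uc by simp
  fix v assume v: "v \<in> Units R"
  have vc: "v \<in> carrier R" using v by auto
  have "d \<oplus> inv u \<otimes> v \<in> Units R" using d v u unfolding Delta_def by auto
  hence "u \<otimes> (d \<oplus> inv u \<otimes> v) \<in> Units R" using u by simp
  moreover have "u \<otimes> (d \<oplus> inv u \<otimes> v) = u \<otimes> d \<oplus> (u \<otimes> inv u) \<otimes> v" using dc uc vc by (algebra, (simp add: r_neg1 r_neg2)?)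
  ultimately show "u \<otimes> d \<oplus> v \<in> Units R" using u vc by simp
qed

lemma D_rmul: assumes u: "u \<in> Units R" and d: "d \<in> Delta R" shows "d \<otimes> u \<in> Delta R"
  unfolding Delta_def
proof (intro CollectI conjI ballI)
  have dc: "d \<in> carrier R" using D_carr d by auto
  have uc: "u \<in> carrier R" "inv u \<in> carrier R" using u by auto
  show "d \<otimes> u \<in> carrier R" using dc uc by simp
  fix v assume v: "v \<in> Units R"
  have vc: "v \<in> carrier R" using v by auto
  have "d \<oplus> v \<otimes> inv u \<in> Units R" using d v u unfolding Delta_def by auto
  hence "(d \<oplus> v \<otimes> inv u) \<otimes> u \<in> Units R" using u by simp
  moreover have "(d \<oplus> v \<otimes> inv u) \<otimes> u = d \<otimes> u \<oplus> v \<otimes> (inv u \<otimes> u)" using dc uc vc by (algebra, (simp add: r_neg1 r_neg2)?)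
  ultimately show "d \<otimes> u \<oplus> v \<in> Units R" using u vc by simp
qed

lemma idem_linv:
  assumes f: "f \<in> carrier R" "f \<otimes> f = f" and d: "d \<in> Delta R"
  shows "\<exists>L\<in>carrier R. L \<otimes> (\<one> \<oplus> f \<otimes> d) = \<one>"
proof -
  have dc: "d \<in> carrier R" using D_carr d by auto
  define g where "g = \<one> \<ominus> f"
  have gc: "g \<in> carrier R" unfolding g_def using f by simp
  have fg: "f \<otimes> g = \<zero>"
  proof -
    have "f \<otimes> g = f \<ominus> f \<otimes> f" unfolding g_def using f(1) by (algebra, (simp add: r_neg1 r_neg2)?)
    thus ?thesis using f by (simp add: a_minus_def r_neg)
  qed
  have gf: "g \<otimes> f = \<zero>"
  proof -
    have "g \<otimes> f = f \<ominus> f \<otimes> f" unfolding g_def using f(1) by (algebra, (simp add: r_neg1 r_neg2)?)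
    thus ?thesis using f by (simp add: a_minus_def r_neg)
  qed
  have fpg: "f \<oplus> g = \<one>" unfolding g_def using f(1) by (algebra, (simp add: r_neg1 r_neg2)?)
  define v where "v = \<one> \<ominus> g \<otimes> d \<otimes> f"
  have vc: "v \<in> carrier R" unfolding v_def using gc dc f by simp
  have v1: "v \<otimes> (\<one> \<oplus> g \<otimes> d \<otimes> f) = \<one> \<ominus> g \<otimes> d \<otimes> (f \<otimes> g) \<otimes> d \<otimes> f"
    unfolding v_def using gc dc f(1) by (algebra, (simp add: r_neg1 r_neg2)?)
  have v2: "(\<one> \<oplus> g \<otimes> d \<otimes> f) \<otimes> v = \<one> \<ominus> g \<otimes> d \<otimes> (f \<otimes> g) \<otimes> d \<otimes> f"
    unfolding v_def using gc dc f(1) by (algebra, (simp add: r_neg1 r_neg2)?)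
  have vu: "v \<in> Units R"
    using unitI2[OF vc _ , of "\<one> \<oplus> g \<otimes> d \<otimes> f"] v1 v2 gc dc f fg
    by (simp add: a_minus_def)
  define z where "z = d \<oplus> v"
  have zu: "z \<in> Units R" unfolding z_def using d vu unfolding Delta_def by auto
  define y where "y = inv z"
  have yc: "y \<in> carrier R" and zc: "z \<in> carrier R" and yz: "y \<otimes> z = \<one>"
    using zu unfolding y_def by auto
  have zf: "z \<otimes> f = f \<otimes> d \<otimes> f \<oplus> f"
  proof -
    have "z \<otimes> f = d \<otimes> f \<oplus> f \<ominus> g \<otimes> d \<otimes> (f \<otimes> f)" unfolding z_def v_def using f(1) gc dc by (algebra, (simp add: r_neg1 r_neg2)?)
    also have "\<dots> = d \<otimes> f \<oplus> f \<ominus> g \<otimes> d \<otimes> f" using f by simp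
    also have "\<dots> = f \<otimes> d \<otimes> f \<oplus> f" unfolding g_def using f(1) dc by (algebra, (simp add: r_neg1 r_neg2)?)
    finally show ?thesis .
  qed
  define p where "p = f \<otimes> y \<otimes> f"
  have pc: "p \<in> carrier R" unfolding p_def using f yc by simp
  have fzf: "f \<otimes> (z \<otimes> f) = z \<otimes> f"
  proof -
    have "f \<otimes> (f \<otimes> d \<otimes> f \<oplus> f) = (f \<otimes> f) \<otimes> d \<otimes> f \<oplus> f \<otimes> f" using f(1) dc by (algebra, (simp add: r_neg1 r_neg2)?)
    thus ?thesis using zf f by simp
  qed
  have pp: "p \<otimes> (f \<otimes> d \<otimes> f \<oplus> f) = f"
  proof -
    have "p \<otimes> (z \<otimes> f) = f \<otimes> y \<otimes> (f \<otimes> (z \<otimes> f))" unfolding p_def using f(1) yc zc by (algebra, (simp add: r_neg1 r_neg2)?)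
    also have "\<dots> = f \<otimes> y \<otimes> (z \<otimes> f)" using fzf by simp
    also have "\<dots> = f \<otimes> (y \<otimes> z) \<otimes> f" using f(1) yc zc by (algebra, (simp add: r_neg1 r_neg2)?)
    finally show ?thesis using zf yz f by simp
  qed
  have pf: "p \<otimes> f = p"
  proof -
    have "p \<otimes> f = f \<otimes> y \<otimes> (f \<otimes> f)" unfolding p_def using f(1) yc by (algebra, (simp add: r_neg1 r_neg2)?)
    thus ?thesis using f unfolding p_def by simp
  qed
  define LB where "LB = p \<oplus> g"
  have LBc: "LB \<in> carrier R" unfolding LB_def using pc gc by simp
  have LB: "LB \<otimes> (\<one> \<oplus> f \<otimes> d \<otimes> f) = \<one>"
  proof -
    have "LB \<otimes> (\<one> \<oplus> f \<otimes> d \<otimes> f) = p \<otimes> (f \<otimes> d \<otimes> f \<oplus> f) \<oplus> g \<oplus> (g \<otimes> f) \<otimes> d \<otimes> f \<oplus> (p \<ominus> p \<otimes> f)"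
      unfolding LB_def using pc gc f(1) dc by (algebra, (simp add: r_neg1 r_neg2)?)
    also have "\<dots> = f \<oplus> g" using pp gf pf pc gc dc f by (simp add: a_minus_def r_neg)
    finally show ?thesis using fpg by simp
  qed
  have A1: "(\<one> \<ominus> f \<otimes> d \<otimes> g) \<otimes> (\<one> \<oplus> f \<otimes> d \<otimes> g) = \<one>"
  proof -
    have "(\<one> \<ominus> f \<otimes> d \<otimes> g) \<otimes> (\<one> \<oplus> f \<otimes> d \<otimes> g) = \<one> \<ominus> f \<otimes> d \<otimes> (g \<otimes> f) \<otimes> d \<otimes> g"
      using gc dc f(1) by (algebra, (simp add: r_neg1 r_neg2)?)
    thus ?thesis using gf gc dc f by (simp add: a_minus_def)
  qed
  have AB: "(\<one> \<oplus> f \<otimes> d \<otimes> g) \<otimes> (\<one> \<oplus> f \<otimes> d \<otimes> f) = \<one> \<oplus> f \<otimes> d"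
  proof -
    have "(\<one> \<oplus> f \<otimes> d \<otimes> g) \<otimes> (\<one> \<oplus> f \<otimes> d \<otimes> f) = \<one> \<oplus> f \<otimes> d \<otimes> (f \<oplus> g) \<oplus> f \<otimes> d \<otimes> (g \<otimes> f) \<otimes> d \<otimes> f"
      using gc dc f(1) by (algebra, (simp add: r_neg1 r_neg2)?)
    thus ?thesis using gf fpg gc dc f by simp
  qed
  define L where "L = LB \<otimes> (\<one> \<ominus> f \<otimes> d \<otimes> g)"
  have Ac: "\<one> \<ominus> f \<otimes> d \<otimes> g \<in> carrier R" "\<one> \<oplus> f \<otimes> d \<otimes> g \<in> carrier R" "\<one> \<oplus> f \<otimes> d \<otimes> f \<in> carrier R"
    using gc dc f by auto
  have "L \<otimes> (\<one> \<oplus> f \<otimes> d) = LB \<otimes> (\<one> \<ominus> f \<otimes> d \<otimes> g) \<otimes> ((\<one> \<oplus> f \<otimes> d \<otimes> g) \<otimes> (\<one> \<oplus> f \<otimes> d \<otimes> f))"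
    unfolding L_def AB by simp
  also have "\<dots> = LB \<otimes> ((\<one> \<ominus> f \<otimes> d \<otimes> g) \<otimes> (\<one> \<oplus> f \<otimes> d \<otimes> g)) \<otimes> (\<one> \<oplus> f \<otimes> d \<otimes> f)"
    using Ac LBc by (simp add: m_assoc)
  also have "\<dots> = \<one>" using A1 LB LBc by simp
  finally show ?thesis using L_def LBc gc dc f by (intro bexI[of _ L]) auto
qed

lemma Delta_sub_J:
  assumes DT: "\<And>r. r \<in> carrier R \<Longrightarrow> \<exists>e\<in>tripotents R. \<exists>d\<in>Delta R. r = e \<oplus> d"
    and d: "d \<in> Delta R"
  shows "d \<in> jacobson_radical R"
proof (rule jac_char)
  have dc: "d \<in> carrier R" using D_carr d by auto
  show "d \<in> carrier R" by (rule dc)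
  fix r assume r: "r \<in> carrier R"
  obtain e d' where e: "e \<in> tripotents R" and d': "d' \<in> Delta R" and rr: "r = e \<oplus> d'" using DT[OF r] by blast
  have ec: "e \<in> carrier R" and e3: "e \<otimes> e \<otimes> e = e"
    using e unfolding tripotents_def by (auto simp: numeral_3_eq_3)
  have d'c: "d' \<in> carrier R" using D_carr d' by auto
  define f where "f = \<one> \<ominus> e \<otimes> e"
  have fc: "f \<in> carrier R" unfolding f_def using ec by simp
  have ff: "f \<otimes> f = f"
  proof -
    have "f \<otimes> f = \<one> \<ominus> e \<otimes> e \<ominus> e \<otimes> e \<oplus> (e \<otimes> e \<otimes> e) \<otimes> e" unfolding f_def using ec by (algebra, (simp add: r_neg1 r_neg2)?)
    also have "\<dots> = \<one> \<ominus> e \<otimes> e \<ominus> e \<otimes> e \<oplus> e \<otimes> e" using e3 by simp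
    also have "\<dots> = f" unfolding f_def using ec by (algebra, (simp add: r_neg1 r_neg2)?)
    finally show ?thesis .
  qed
  define w where "w = e \<oplus> f"
  have wc: "w \<in> carrier R" unfolding w_def using ec fc by simp
  have ww: "w \<otimes> w = \<one>"
  proof -
    have "w \<otimes> w = \<one> \<oplus> (e \<ominus> e \<otimes> e \<otimes> e) \<oplus> (e \<ominus> e \<otimes> e \<otimes> e) \<oplus> ((e \<otimes> e \<otimes> e) \<otimes> e \<ominus> e \<otimes> e)"
      unfolding w_def f_def using ec by (algebra, (simp add: r_neg1 r_neg2)?)
    also have "\<dots> = \<one>" using e3 ec by (simp add: a_minus_def r_neg)
    finally show ?thesis .
  qed
  have wu: "w \<in> Units R" using unitI2[OF wc wc ww ww] .
  define \<delta> where "\<delta> = \<ominus> (w \<otimes> d) \<oplus> \<ominus> ((\<one> \<oplus> d') \<otimes> d) \<oplus> d"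
  have \<delta>D: "\<delta> \<in> Delta R" unfolding \<delta>_def
    by (intro D_add D_neg D_lmul wu d D_one_add d')
  have \<delta>c: "\<delta> \<in> carrier R" using D_carr \<delta>D by auto
  define u where "u = \<one> \<oplus> \<delta>"
  have uu: "u \<in> Units R" unfolding u_def using D_one_add[OF \<delta>D] .
  have uc: "u \<in> carrier R" and iuc: "inv u \<in> carrier R" and iuu: "inv u \<otimes> u = \<one>" using uu by auto
  have eq1: "\<one> \<ominus> r \<otimes> d = u \<oplus> f \<otimes> d"
    unfolding rr u_def \<delta>_def w_def using ec d'c dc fc by (algebra, (simp add: r_neg1 r_neg2)?)
  have d2: "d \<otimes> inv u \<in> Delta R" using D_rmul[OF Units_inv_Units[OF uu] d] .
  obtain L0 where L0: "L0 \<in> carrier R" "L0 \<otimes> (\<one> \<oplus> f \<otimes> (d \<otimes> inv u)) = \<one>"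
    using idem_linv[OF fc ff d2] by blast
  have eq2: "u \<oplus> f \<otimes> d = (\<one> \<oplus> f \<otimes> (d \<otimes> inv u)) \<otimes> u"
  proof -
    have "(\<one> \<oplus> f \<otimes> (d \<otimes> inv u)) \<otimes> u = u \<oplus> f \<otimes> d \<otimes> (inv u \<otimes> u)" using fc dc iuc uc by (algebra, (simp add: r_neg1 r_neg2)?)
    thus ?thesis using iuu fc dc by simp
  qed
  have "(inv u \<otimes> L0) \<otimes> (\<one> \<ominus> r \<otimes> d) = inv u \<otimes> (L0 \<otimes> (\<one> \<oplus> f \<otimes> (d \<otimes> inv u))) \<otimes> u"
    unfolding eq1 eq2 using iuc L0(1) fc dc uc by (algebra, (simp add: r_neg1 r_neg2)?)
  also have "\<dots> = \<one>" using L0 iuu iuc by simp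
  finally show "\<exists>L\<in>carrier R. L \<otimes> (\<one> \<ominus> r \<otimes> d) = \<one>" using iuc L0(1) by (intro bexI[of _ "inv u \<otimes> L0"]) auto
qed

lemma main_ring:
  assumes DT: "\<And>r. r \<in> carrier R \<Longrightarrow> \<exists>e\<in>tripotents R. \<exists>d\<in>Delta R. r = e \<oplus> d"
  shows "\<exists>(R1 :: 'a set set ring) (R2 :: 'a set set ring).
           (zero_ring R1 \<or> (boolean_ring R1 \<and> \<not> zero_ring R1)) \<and>
           (zero_ring R2 \<or> (yaqub_ring R2 \<and> \<not> zero_ring R2)) \<and>
           R Quot (jacobson_radical R) \<simeq> RDirProd R1 R2"
proof -
  let ?J = "jacobson_radical R"
  have idJ: "ideal ?J R" by (rule jac_ideal)
  interpret S: ring "R Quot ?J" by (rule ideal.quotient_is_ring[OF idJ])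
  have hom: "(+>) ?J \<in> ring_hom R (R Quot ?J)" by (rule ideal.rcos_ring_hom[OF idJ])
  have trip: "Xc \<otimes>\<^bsub>R Quot ?J\<^esub> Xc \<otimes>\<^bsub>R Quot ?J\<^esub> Xc = Xc" if Xc: "Xc \<in> carrier (R Quot ?J)" for Xc
  proof -
    obtain x where x: "x \<in> carrier R" and X: "Xc = ?J +> x"
      using Xc unfolding FactRing_def A_RCOSETS_def' by auto
    obtain e d where e: "e \<in> tripotents R" and d: "d \<in> Delta R" and xe: "x = e \<oplus> d" using DT[OF x] by blast
    have ec: "e \<in> carrier R" and e3: "e \<otimes> e \<otimes> e = e"
      using e unfolding tripotents_def by (auto simp: numeral_3_eq_3)
    have dJ: "d \<in> ?J" using Delta_sub_J[OF DT d] .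
    have dc: "d \<in> carrier R" using D_carr[OF d] .
    have "x \<ominus> e = d" unfolding xe using ec dc by (algebra, (simp add: r_neg1 r_neg2)?)
    hence Xe: "Xc = ?J +> e" using quotient_eq_iff_same_a_r_cos[OF idJ x ec] dJ X by simp
    have "Xc \<otimes>\<^bsub>R Quot ?J\<^esub> Xc \<otimes>\<^bsub>R Quot ?J\<^esub> Xc = ?J +> (e \<otimes> e \<otimes> e)"
      using Xe ec ring_hom_mult[OF hom] by simp
    thus ?thesis using e3 Xe by simp
  qed
  show ?thesis using S.tripotent_decomp[OF trip] by simp
qed

end

theorem theorem4p8:
  fixes R :: "('a, 'b) ring_scheme"
  assumes "DT_ring R"
  shows "\<exists>(R1 :: 'a set set ring) (R2 :: 'a set set ring).
           (zero_ring R1 \<or> (boolean_ring R1 \<and> \<not> zero_ring R1)) \<and>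
           (zero_ring R2 \<or> (yaqub_ring R2 \<and> \<not> zero_ring R2)) \<and>
           R Quot (jacobson_radical R) \<simeq> RDirProd R1 R2"
proof -
  have r: "ring R" using assms unfolding DT_ring_def by auto
  show ?thesis using ring.main_ring[OF r] assms unfolding DT_ring_def by blast
qed

end
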